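(* The infimum of $\operatorname{Rib}(\mathcal{U}_{w,F})$ over all folded ribbon $3$-stick unknots $\mathcal{U}_{w,F}$ (any non-degenerate triangle diagram $\mathcal{U}$, any width $w$, any folding information $F$) with ribbon linking number $\operatorname{Lk}(\mathcal{U}_{w,F})=\pm1$ equals $\sqrt{3}$, and this value is attained when $\mathcal{U}$ is an equilateral triangle.
   Context: A folded ribbon $3$-stick unknot corresponds to an unknot diagram $\mathcal{U}$ with three edges, here a non-degenerate triangle (non-collinear vertices). For width $w>0$, the corresponding folded ribbon $\mathcal{U}_{w,F}$ is a flat strip of width $w$ centred on $\mathcal{U}$ (boundary parallel to and at distance $w/2$ from each edge), folded at each vertex along a fold line through the vertex perpendicular to the bisector of the angle there; it is a piecewise-linear immersion of a Möbius band into the plane whose only singularities are the pairwise disjoint fold lines; the folding information $F$ records at each fold which of the two layers of ribbon lies on top. Folded ribbonlength: $\operatorname{Rib}(\mathcal{U}_{w,F})=\operatorname{Len}(\mathcal{U})/w$. The ribbon linking number $\operatorname{Lk}(\mathcal{U}_{w,F})$ (for an orientation of $\mathcal{U}$) is the linking number of the diagram with the boundary of the ribbon, i.e. one half the sum of the signs (right-hand rule) of the crossings between the diagram and the boundary curve. For such ribbons $\operatorname{Lk}\in\{\pm1,\pm3\}$. *)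

theory Defs
  imports "HOL-Analysis.Analysis"
begin

text \<open>
  A 3-stick unknot diagram is given by its vertices V 0, V 1, V 2 in the plane
  (modelled as complex numbers); indices are taken mod 3.  Edge i runs from
  vertex i to vertex i+1; this fixes the orientation of the diagram.
\<close>

definition vtx :: "(nat \<Rightarrow> complex) \<Rightarrow> nat \<Rightarrow> complex" where
  "vtx V i = V (i mod 3)"

definition edge_vec :: "(nat \<Rightarrow> complex) \<Rightarrow> nat \<Rightarrow> complex" where
  "edge_vec V i = vtx V (Suc i) - vtx V i"

text \<open>planar cross product (z-component)\<close>
definition cross2 :: "complex \<Rightarrow> complex \<Rightarrow> real" where
  "cross2 a b = Im (cnj a * b)"

text \<open>Direction of the fold line at vertex m: perpendicular to the bisector
  of the angle at vertex m (bisector direction = unit outgoing edge minus unit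
  incoming edge).\<close>
definition fold_dir :: "(nat \<Rightarrow> complex) \<Rightarrow> nat \<Rightarrow> complex" where
  "fold_dir V m = \<i> * (sgn (edge_vec V m) - sgn (edge_vec V (m + 2)))"

text \<open>The fold line at vertex m inside the ribbon of width w: the points of the
  fold line through vertex m at distance less than w/2 from the line of the
  outgoing edge (equivalently, by symmetry, of the incoming edge).  The segment
  is taken without its two end points on the ribbon boundary.\<close>
definition fold_segment :: "(nat \<Rightarrow> complex) \<Rightarrow> real \<Rightarrow> nat \<Rightarrow> complex set" where
  "fold_segment V w m =
     {vtx V m + of_real t * fold_dir V m | t.
        \<bar>cross2 (sgn (edge_vec V m)) (of_real t * fold_dir V m)\<bar> < w / 2}"

definition folded_ribbon_3stick :: "(nat \<Rightarrow> complex) \<Rightarrow> real \<Rightarrow> bool" where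
  "folded_ribbon_3stick V w \<longleftrightarrow>
     \<not> collinear {V 0, V 1, V 2} \<and> 0 < w \<and>
     (\<forall>i<3. \<forall>j<3. i \<noteq> j \<longrightarrow> fold_segment V w i \<inter> fold_segment V w j = {})"

definition crossing_sign :: "complex \<Rightarrow> complex \<Rightarrow> real" where
  "crossing_sign ov un = sgn (cross2 ov un)"

text \<open>Folding information F: F m holds iff at the fold at vertex m the layer of
  the outgoing edge m lies on top of the layer of the incoming edge m-1.
  At the fold at vertex m the diagram crosses the ribbon boundary twice:
  the centre line of the outgoing edge crosses the (parallel, equally oriented)
  boundary of the incoming strip, and the centre line of the incoming edge
  crosses the boundary of the outgoing strip.\<close>
definition ribbon_Lk :: "(nat \<Rightarrow> complex) \<Rightarrow> (nat \<Rightarrow> bool) \<Rightarrow> real" where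
  "ribbon_Lk V F = (1/2) * (\<Sum>m<3.
      (let out = edge_vec V m; inc = edge_vec V (m + 2) in
        \<comment> \<open>centre line of outgoing edge vs boundary of incoming strip\<close>
        (if F m then crossing_sign out inc else crossing_sign inc out)
        \<comment> \<open>centre line of incoming edge vs boundary of outgoing strip\<close>
      + (if F m then crossing_sign out inc else crossing_sign inc out)))"

definition ribbonlength :: "(nat \<Rightarrow> complex) \<Rightarrow> real \<Rightarrow> real" where
  "ribbonlength V w =
     (cmod (edge_vec V 0) + cmod (edge_vec V 1) + cmod (edge_vec V 2)) / w"

end

theory Submission
  imports Defs
begin

lemma cross2_eq: "cross2 a b = Re a * Im b - Im a * Re b"
  by (simp add: cross2_def)

lemma coll_iff:
  fixes A B C :: complex
  shows "collinear {A, B, C} \<longleftrightarrow> cross2 (B - A) (C - B) = 0"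
proof -
  have "collinear {A, B, C} \<longleftrightarrow> collinear {0, A - B, C - B}"
    by (auto simp add: collinear_def)
  also have "\<dots> \<longleftrightarrow> A - B = 0 \<or> C - B = 0 \<or> (\<exists>c. C - B = c *\<^sub>R (A - B))"
    by (rule collinear_lemma)
  also have "\<dots> \<longleftrightarrow> cross2 (B - A) (C - B) = 0"
  proof
    assume "A - B = 0 \<or> C - B = 0 \<or> (\<exists>c. C - B = c *\<^sub>R (A - B))"
    moreover have "cross2 (B - A) (C - B) = 0" if "C - B = c *\<^sub>R (A - B)" for c
    proof -
      have "cross2 (B - A) (C - B) = cross2 (B - A) (c *\<^sub>R (A - B))" using that by simp
      also have "\<dots> = 0" by (simp add: cross2_eq algebra_simps)
      finally show ?thesis .
    qed
    ultimately show "cross2 (B - A) (C - B) = 0"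
      by (auto simp: cross2_eq algebra_simps)
  next
    assume h: "cross2 (B - A) (C - B) = 0"
    show "A - B = 0 \<or> C - B = 0 \<or> (\<exists>c. C - B = c *\<^sub>R (A - B))"
    proof (cases "A - B = 0")
      case False
      define p where "p = A - B"
      define q where "q = C - B"
      have n: "Re p ^ 2 + Im p ^ 2 \<noteq> 0" using False p_def
        by (metis complex_eq_0)
      have hh: "Re p * Im q - Im p * Re q = 0" using h unfolding p_def q_def cross2_eq
        by (simp add: algebra_simps)
      have "q = ((Re p * Re q + Im p * Im q) / (Re p ^ 2 + Im p ^ 2)) *\<^sub>R p"
        using n hh
        by (simp add: complex_eq_iff field_simps power2_eq_square)
      then show ?thesis unfolding p_def q_def by blast
    qed simp
  qed
  finally show ?thesis .
qed

definition dot2 :: "complex \<Rightarrow> complex \<Rightarrow> real" where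
  "dot2 a b = Re a * Re b + Im a * Im b"

lemma unit_sq: "cmod u = 1 \<Longrightarrow> Re u ^ 2 + Im u ^ 2 = 1"
  by (metis cmod_power2 one_power2)

lemma cross2_add_right: "cross2 a (b + c) = cross2 a b + cross2 a c"
  by (simp add: cross2_eq algebra_simps)

lemma cross2_scale_left: "cross2 (of_real k * a) b = k * cross2 a b"
  by (simp add: cross2_eq algebra_simps)

lemma cross2_scale_right: "cross2 a (of_real k * b) = k * cross2 a b"
  by (simp add: cross2_eq algebra_simps)

lemma cross2_self: "cross2 a a = 0"
  by (simp add: cross2_eq algebra_simps)

lemma cross2_ii: "cmod u = 1 \<Longrightarrow> cross2 u (\<i> * (u - v)) = 1 - dot2 u v"
  using unit_sq[of u] by (simp add: cross2_eq dot2_def algebra_simps power2_eq_square)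

lemma cross2_ii2: "cmod v = 1 \<Longrightarrow> cross2 v (\<i> * (u - v)) = dot2 u v - 1"
  using unit_sq[of v] by (simp add: cross2_eq dot2_def algebra_simps power2_eq_square)

lemma three_cross:
  "cross2 (B - A) (P - A) + cross2 (C - B) (P - B) + cross2 (A - C) (P - C) = cross2 (B - A) (C - B)"
  by (simp add: cross2_eq algebra_simps)

lemma perp_lemma:
  fixes m1 m2 q1 q2 :: real
  assumes h: "m1*q1 + m2*q2 = 0" and n: "m1^2 + m2^2 \<noteq> 0"
  shows "q1 = ((-m2*q1 + m1*q2)/(m1^2+m2^2)) * (-m2)"
    and "q2 = ((-m2*q1 + m1*q2)/(m1^2+m2^2)) * m1"
proof -
  have a: "m1 * (m1*q1 + m2*q2) = 0" "m2 * (m1*q1 + m2*q2) = 0" using h by simp_all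
  show "q1 = ((-m2*q1 + m1*q2)/(m1^2+m2^2)) * (-m2)"
    using n a(1) by (simp add: field_simps power2_eq_square; simp add: algebra_simps)
  show "q2 = ((-m2*q1 + m1*q2)/(m1^2+m2^2)) * m1"
    using n a(2) by (simp add: field_simps power2_eq_square; simp add: algebra_simps)
qed

lemma key_abs:
  fixes A B C u0 u1 u2 :: complex and a b c w :: real
  assumes u: "cmod u0 = 1" "cmod u1 = 1" "cmod u2 = 1"
    and e: "B - A = of_real c * u0" "C - B = of_real a * u1" "A - C = of_real b * u2"
    and pos: "a > 0" "b > 0" "c > 0" "a + b - c > 0"
    and D: "cross2 (B - A) (C - B) \<noteq> 0"
  shows "(\<exists>P. (\<exists>t. P = A + of_real t * (\<i> * (u0 - u2)) \<and> \<bar>cross2 u0 (of_real t * (\<i> * (u0 - u2)))\<bar> < w/2)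
            \<and> (\<exists>t. P = B + of_real t * (\<i> * (u1 - u0)) \<and> \<bar>cross2 u1 (of_real t * (\<i> * (u1 - u0)))\<bar> < w/2))
         \<longleftrightarrow> \<bar>cross2 (B - A) (C - B)\<bar> / (a + b - c) < w/2"
    (is "?L \<longleftrightarrow> ?R")
proof -
  define Dv where "Dv = cross2 (B - A) (C - B)"
  define x where "x = a + b - c"
  have xpos: "x > 0" using pos x_def by simp
  have ident: "c * cross2 u0 (P - A) + a * cross2 u1 (P - B) + b * cross2 u2 (P - C) = Dv" for P
    using three_cross[of B A P C] unfolding Dv_def e by (simp add: cross2_scale_left)
  have CB: "C - B = - (of_real c * u0) - of_real b * u2"
    using e by (simp add: algebra_simps)
  have D2: "Dv = - (c * b) * cross2 u0 u2"
    unfolding Dv_def e(1) CB by (simp add: cross2_eq algebra_simps)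
  have D3: "Dv = c * a * cross2 u0 u1"
    unfolding Dv_def e(1) e(2) by (simp add: cross2_eq algebra_simps)
  have Dnz: "Dv \<noteq> 0" using D Dv_def by simp
  show ?thesis
  proof
    assume ?L
    then obtain P t t' where P1: "P = A + of_real t * (\<i> * (u0 - u2))"
      and c1: "\<bar>cross2 u0 (of_real t * (\<i> * (u0 - u2)))\<bar> < w/2"
      and P2: "P = B + of_real t' * (\<i> * (u1 - u0))" by blast
    have f1: "cross2 u0 (P - A) = t * (1 - dot2 u0 u2)"
      using P1 cross2_ii[OF u(1), of u2] by (simp add: cross2_scale_right)
    have f3: "cross2 u2 (P - C) = - (t * (1 - dot2 u0 u2))"
    proof -
      have eq: "P - C = of_real b * u2 + of_real t * (\<i> * (u0 - u2))"
        using P1 e(3) by (simp add: algebra_simps)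
      show ?thesis
        unfolding eq cross2_add_right cross2_scale_right cross2_self cross2_ii2[OF u(3)]
        by (simp add: algebra_simps)
    qed
    have f2: "cross2 u1 (P - B) = t' * (1 - dot2 u1 u0)"
      using P2 cross2_ii[OF u(2), of u0] by (simp add: cross2_scale_right)
    have f1': "cross2 u0 (P - A) = - (t' * (1 - dot2 u1 u0))"
    proof -
      have eq: "P - A = of_real c * u0 + of_real t' * (\<i> * (u1 - u0))"
        using P2 e(1) by (simp add: algebra_simps)
      show ?thesis
        unfolding eq cross2_add_right cross2_scale_right cross2_self cross2_ii2[OF u(1)]
        by (simp add: algebra_simps)
    qed
    have e2: "cross2 u1 (P - B) = - cross2 u0 (P - A)" using f2 f1' by simp
    have e3: "cross2 u2 (P - C) = - cross2 u0 (P - A)" using f3 f1 by simp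
    have "c * cross2 u0 (P - A) - a * cross2 u0 (P - A) - b * cross2 u0 (P - A) = Dv"
      using ident[of P] unfolding e2 e3 by (simp add: algebra_simps)
    then have "- x * cross2 u0 (P - A) = Dv" unfolding x_def by (simp add: algebra_simps)
    then have "\<bar>Dv\<bar> = x * \<bar>cross2 u0 (P - A)\<bar>" using xpos
      by (metis abs_minus_cancel abs_mult abs_of_pos mult_minus_left)
    then have "\<bar>cross2 u0 (P - A)\<bar> = \<bar>Dv\<bar> / x" using xpos
      by (simp add: field_simps)
    moreover have "cross2 u0 (P - A) = cross2 u0 (of_real t * (\<i> * (u0 - u2)))" using P1 by simp
    ultimately show ?R using c1 unfolding Dv_def x_def by simp
  next
    assume R: ?R
    have u02: "u0 \<noteq> u2" using Dnz D2 cross2_self by auto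
    have u01: "u1 \<noteq> u0" using Dnz D3 cross2_self by auto
    have u01m: "u0 + u1 \<noteq> 0"
    proof
      assume "u0 + u1 = 0"
      then have "u1 = - u0" by (simp add: add_eq_0_iff)
      then show False using Dnz D3 by (simp add: cross2_eq algebra_simps)
    qed
    define k where "k = 1 - dot2 u0 u2"
    have kpos: "k > 0"
    proof -
      have "k = ((Re u0 - Re u2)^2 + (Im u0 - Im u2)^2) / 2"
        using unit_sq[OF u(1)] unit_sq[OF u(3)] unfolding k_def dot2_def
        by (simp add: power2_eq_square algebra_simps)
      moreover have "(Re u0 - Re u2)^2 + (Im u0 - Im u2)^2 > 0"
        using u02 by (metis complex_eq_iff add_pos_nonneg add_nonneg_pos right_minus_eq
              zero_less_power2 zero_le_power2)
      ultimately show ?thesis by simp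
    qed
    define f where "f = - Dv / x"
    define t where "t = f / k"
    define P where "P = A + of_real t * (\<i> * (u0 - u2))"
    have tk: "t * k = f" unfolding t_def using kpos by simp
    have f1: "cross2 u0 (P - A) = f"
      unfolding P_def using cross2_ii[OF u(1), of u2] tk
      by (simp add: cross2_scale_right k_def)
    have f3: "cross2 u2 (P - C) = - f"
    proof -
      have eq: "P - C = of_real b * u2 + of_real t * (\<i> * (u0 - u2))"
        using P_def e(3) by (simp add: algebra_simps)
      show ?thesis
        unfolding eq cross2_add_right cross2_scale_right cross2_self cross2_ii2[OF u(3)]
        using tk by (simp add: k_def algebra_simps)
    qed
    have fx: "f * x = - Dv" unfolding f_def using xpos by simp
    have f2: "cross2 u1 (P - B) = - f"
    proof -
      have "a * cross2 u1 (P - B) = Dv - c * f + b * f"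
        using ident[of P] unfolding f1 f3 by (simp add: algebra_simps)
      also have "\<dots> = a * (- f)" using fx unfolding x_def by (simp add: algebra_simps)
      finally have "a * cross2 u1 (P - B) = a * (- f)" .
      then show ?thesis using pos(1) by (metis mult_cancel_left less_irrefl)
    qed
    define Q where "Q = P - B"
    have cQ: "cross2 (u0 + u1) Q = 0"
    proof -
      have "cross2 u0 (P - A) = cross2 u0 (P - B) + cross2 u0 (B - A)"
        by (simp add: cross2_eq algebra_simps)
      then have "cross2 u0 Q = f" unfolding Q_def f1 e(1) cross2_scale_right cross2_self by simp
      then show ?thesis using f2 unfolding Q_def by (simp add: cross2_eq algebra_simps)
    qed
    have mQ: "dot2 (u1 - u0) Q = 0"
    proof -
      have pm: "dot2 (u0 + u1) (u1 - u0) = 0"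
        using unit_sq[OF u(1)] unit_sq[OF u(2)] unfolding dot2_def
        by (simp add: power2_eq_square algebra_simps)
      have np: "(Re (u0 + u1))^2 + (Im (u0 + u1))^2 \<noteq> 0"
        using u01m by (metis complex_eq_0)
      have "((Re (u0 + u1))^2 + (Im (u0 + u1))^2) * dot2 (u1 - u0) Q
          = dot2 (u0 + u1) (u1 - u0) * dot2 (u0 + u1) Q - cross2 (u1 - u0) (u0 + u1) * cross2 (u0 + u1) Q"
        unfolding dot2_def cross2_eq by (simp add: power2_eq_square algebra_simps)
      then show ?thesis using pm cQ np by (metis mult_eq_0_iff mult_zero_left diff_self)
    qed
    define m where "m = u1 - u0"
    have nm: "(Re m)^2 + (Im m)^2 \<noteq> 0" unfolding m_def using u01
      by (metis complex_eq_0 right_minus_eq)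
    define t' where "t' = (- Im m * Re Q + Re m * Im Q) / ((Re m)^2 + (Im m)^2)"
    have Qt: "Q = of_real t' * (\<i> * (u1 - u0))"
    proof -
      have h: "Re m * Re Q + Im m * Im Q = 0" using mQ unfolding dot2_def m_def .
      show ?thesis unfolding complex_eq_iff t'_def
        using perp_lemma[OF h nm] unfolding m_def by simp
    qed
    show ?L
    proof (intro exI conjI)
      show "P = A + of_real t * (\<i> * (u0 - u2))" by (rule P_def)
      show "\<bar>cross2 u0 (of_real t * (\<i> * (u0 - u2)))\<bar> < w/2"
        using f1 R pos(4) unfolding P_def f_def Dv_def x_def by simp
      show "P = B + of_real t' * (\<i> * (u1 - u0))" using Qt unfolding Q_def
        by (simp add: algebra_simps)
      show "\<bar>cross2 u1 (of_real t' * (\<i> * (u1 - u0)))\<bar> < w/2"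
        using f2 R Qt pos(4) unfolding Q_def f_def Dv_def x_def by simp
    qed
  qed
qed

definition fs :: "complex \<Rightarrow> complex \<Rightarrow> complex \<Rightarrow> real \<Rightarrow> complex set" where
  "fs A B C w = {A + of_real t * (\<i> * (sgn (B - A) - sgn (A - C))) | t.
     \<bar>cross2 (sgn (B - A)) (of_real t * (\<i> * (sgn (B - A) - sgn (A - C))))\<bar> < w / 2}"

lemma vtx_vals: "vtx V 0 = V 0" "vtx V 1 = V 1" "vtx V 2 = V 2" "vtx V 3 = V 0" "vtx V 4 = V 1"
  by (simp_all add: vtx_def)

lemma edge_vals: "edge_vec V 0 = V 1 - V 0" "edge_vec V 1 = V 2 - V 1" "edge_vec V 2 = V 0 - V 2"
   "edge_vec V 3 = V 1 - V 0" "edge_vec V 4 = V 2 - V 1"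
proof -
  have s: "Suc 0 = 1" "Suc 1 = (2::nat)" "Suc 2 = (3::nat)" "Suc 3 = (4::nat)" "Suc 4 = (5::nat)" by simp_all
  have v5: "vtx V 5 = V 2" by (simp add: vtx_def)
  show "edge_vec V 0 = V 1 - V 0" "edge_vec V 1 = V 2 - V 1" "edge_vec V 2 = V 0 - V 2"
   "edge_vec V 3 = V 1 - V 0" "edge_vec V 4 = V 2 - V 1"
    unfolding edge_vec_def s vtx_vals v5 by simp_all
qed

lemma fold_seg_0: "fold_segment V w 0 = fs (V 0) (V 1) (V 2) w"
proof -
  have "fold_dir V 0 = \<i> * (sgn (V 1 - V 0) - sgn (V 0 - V 2))"
    unfolding fold_dir_def by (simp only: add_0 edge_vals)
  then show ?thesis unfolding fold_segment_def fs_def by (simp only: vtx_vals edge_vals)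
qed

lemma fold_seg_1: "fold_segment V w 1 = fs (V 1) (V 2) (V 0) w"
proof -
  have e: "(1::nat) + 2 = 3" by simp
  have "fold_dir V 1 = \<i> * (sgn (V 2 - V 1) - sgn (V 1 - V 0))"
    unfolding fold_dir_def e by (simp only: edge_vals)
  then show ?thesis unfolding fold_segment_def fs_def by (simp only: vtx_vals edge_vals)
qed

lemma fold_seg_2: "fold_segment V w 2 = fs (V 2) (V 0) (V 1) w"
proof -
  have e: "(2::nat) + 2 = 4" by simp
  have "fold_dir V 2 = \<i> * (sgn (V 0 - V 2) - sgn (V 2 - V 1))"
    unfolding fold_dir_def e by (simp only: edge_vals)
  then show ?thesis unfolding fold_segment_def fs_def by (simp only: vtx_vals edge_vals)
qed

lemma sgn_decomp: "z = of_real (cmod z) * sgn z"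
  by (cases "z = 0") (simp_all add: sgn_div_norm scaleR_conv_of_real)

lemma key_sgn:
  fixes A B C :: complex and w :: real
  assumes D: "cross2 (B - A) (C - B) \<noteq> 0"
    and x: "cmod (C - B) + cmod (A - C) - cmod (B - A) > 0"
  shows "fs A B C w \<inter> fs B C A w \<noteq> {} \<longleftrightarrow>
     \<bar>cross2 (B - A) (C - B)\<bar> / (cmod (C - B) + cmod (A - C) - cmod (B - A)) < w/2"
proof -
  have nz: "B - A \<noteq> 0" "C - B \<noteq> 0" "A - C \<noteq> 0"
    using D by (auto simp: cross2_eq algebra_simps)
  have ne: "fs A B C w \<inter> fs B C A w \<noteq> {} \<longleftrightarrow>
    (\<exists>P. (\<exists>t. P = A + of_real t * (\<i> * (sgn (B - A) - sgn (A - C))) \<and>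
        \<bar>cross2 (sgn (B - A)) (of_real t * (\<i> * (sgn (B - A) - sgn (A - C))))\<bar> < w/2)
      \<and> (\<exists>t. P = B + of_real t * (\<i> * (sgn (C - B) - sgn (B - A))) \<and>
        \<bar>cross2 (sgn (C - B)) (of_real t * (\<i> * (sgn (C - B) - sgn (B - A))))\<bar> < w/2))"
    unfolding fs_def by blast
  show ?thesis unfolding ne
  proof (rule key_abs)
    show "B - A = of_real (cmod (B - A)) * sgn (B - A)" by (rule sgn_decomp)
    show "C - B = of_real (cmod (C - B)) * sgn (C - B)" by (rule sgn_decomp)
    show "A - C = of_real (cmod (A - C)) * sgn (A - C)" by (rule sgn_decomp)
  qed (use nz D x in \<open>simp_all add: norm_sgn\<close>)
qed

lemma lin_helper:
  fixes A B T1 T2 :: real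
  shows "2 * (A - 27 * B) = T1 + 6 * T2 \<Longrightarrow> T1 \<ge> 0 \<Longrightarrow> T2 \<ge> 0 \<Longrightarrow> 27 * B \<le> A"
  by (simp add: right_diff_distrib)

lemma heron:
  fixes p q :: complex
  shows "4 * (cross2 p q)^2 = (cmod p + cmod q + cmod (p+q)) * (cmod q + cmod (p+q) - cmod p)
      * (cmod (p+q) + cmod p - cmod q) * (cmod p + cmod q - cmod (p+q))"
proof -
  define a b c where "a = cmod p" and "b = cmod q" and "c = cmod (p + q)"
  have a2: "a^2 = Re p ^2 + Im p ^2" unfolding a_def by (rule cmod_power2)
  have b2: "b^2 = Re q ^2 + Im q ^2" unfolding b_def by (rule cmod_power2)
  have c2: "c^2 = Re (p+q) ^2 + Im (p+q) ^2" unfolding c_def by (rule cmod_power2)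
  have "(a + b + c) * (b + c - a) * (c + a - b) * (a + b - c)
      = 2*a^2*b^2 + 2*b^2*c^2 + 2*c^2*a^2 - (a^2)^2 - (b^2)^2 - (c^2)^2"
    by (simp add: power2_eq_square algebra_simps)
  also have "\<dots> = 4 * (cross2 p q)^2"
    unfolding a2 b2 c2 cross2_eq by (simp add: power2_eq_square algebra_simps)
  finally show ?thesis unfolding a_def b_def c_def by simp
qed

lemma amgm3:
  fixes x y z :: real
  assumes "x \<ge> 0" "y \<ge> 0" "z \<ge> 0"
  shows "27 * (x * y * z) \<le> (x + y + z)^3"
proof -
  have "2 * ((x + y + z)^3 - 27 * (x * y * z)) =
     (x + y + z) * ((x - y)^2 + (y - z)^2 + (z - x)^2)
     + 6 * (x * (y - z)^2 + y * (z - x)^2 + z * (x - y)^2)"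
    by (simp add: power2_eq_square power3_eq_cube algebra_simps)
  moreover have "(x + y + z) * ((x - y)^2 + (y - z)^2 + (z - x)^2) \<ge> 0"
    using assms by simp
  moreover have "x * (y - z)^2 + y * (z - x)^2 + z * (x - y)^2 \<ge> 0"
    using assms by simp
  ultimately show ?thesis
    using lin_helper[of "(x + y + z)^3" "x * y * z"] by blast
qed

lemma final_ineq:
  fixes w x y z dd :: real
  assumes w: "w > 0" and pos: "x > 0" "y > 0" "z > 0" and dd: "dd \<ge> 0"
    and hx: "w * x \<le> 2 * dd" and hy: "w * y \<le> 2 * dd" and hz: "w * z \<le> 2 * dd"
    and her: "4 * dd^2 = (x + y + z) * x * y * z"
  shows "sqrt 3 \<le> (x + y + z) / w"
proof -
  define L where "L = x + y + z"
  have Lpos: "L > 0" using pos L_def by simp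
  have a: "(w * x) * (w * y) \<le> (2 * dd) * (2 * dd)"
    by (rule mult_mono[OF hx hy]) (use w pos dd in auto)
  have "(w * x) * (w * y) * (w * z) \<le> (2 * dd) * (2 * dd) * (2 * dd)"
    by (rule mult_mono[OF a hz]) (use w pos dd in auto)
  also have "(2 * dd) * (2 * dd) * (2 * dd) = 2 * dd * (4 * dd^2)"
    by (simp add: power2_eq_square)
  also have "\<dots> = 2 * dd * L * (x * y * z)" using her unfolding L_def by simp
  finally have "w^3 * (x * y * z) \<le> 2 * dd * L * (x * y * z)"
    by (simp add: power3_eq_cube algebra_simps)
  then have w3: "w^3 \<le> 2 * dd * L" using pos by simp
  have "(w^3)^2 \<le> (2 * dd * L)^2" using w3 w by (intro power_mono) auto
  also have "\<dots> = (4 * dd^2) * L^2" by (simp add: power2_eq_square algebra_simps)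
  also have "\<dots> = L^3 * (x * y * z)" using her unfolding L_def[symmetric]
    by (simp add: power2_eq_square power3_eq_cube algebra_simps)
  finally have "27 * (w^3)^2 \<le> L^3 * (27 * (x * y * z))" by simp
  also have "\<dots> \<le> L^3 * L^3" using amgm3[of x y z] pos Lpos unfolding L_def
    by (intro mult_left_mono) auto
  finally have "(3 * w^2)^3 \<le> (L^2)^3" by (simp add: power2_eq_square power3_eq_cube algebra_simps)
  then have "3 * w^2 \<le> L^2" using power_mono_iff[of "3 * w^2" "L^2" 3] by simp
  then have "(sqrt 3 * w)^2 \<le> L^2" by (simp add: power_mult_distrib)
  then have "sqrt 3 * w \<le> L" by (rule power2_le_imp_le) (use Lpos in linarith)
  then show ?thesis using w unfolding L_def[symmetric] by (simp add: pos_le_divide_eq)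
qed

lemma tri_facts:
  fixes V :: "nat \<Rightarrow> complex"
  assumes nc: "\<not> collinear {V 0, V 1, V 2}"
  defines "la \<equiv> cmod (V 1 - V 0)" and "lb \<equiv> cmod (V 2 - V 1)" and "lc \<equiv> cmod (V 0 - V 2)"
    and "Dv \<equiv> cross2 (V 1 - V 0) (V 2 - V 1)"
  shows "Dv \<noteq> 0"
    and "cross2 (V 2 - V 1) (V 0 - V 2) = Dv" and "cross2 (V 0 - V 2) (V 1 - V 0) = Dv"
    and "4 * Dv^2 = (la + lb + lc) * (lb + lc - la) * (lc + la - lb) * (la + lb - lc)"
    and "lb + lc - la > 0" and "lc + la - lb > 0" and "la + lb - lc > 0"
proof -
  show Dnz: "Dv \<noteq> 0" using nc coll_iff unfolding Dv_def by blast
  show "cross2 (V 2 - V 1) (V 0 - V 2) = Dv" unfolding Dv_def by (simp add: cross2_eq algebra_simps)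
  show "cross2 (V 0 - V 2) (V 1 - V 0) = Dv" unfolding Dv_def by (simp add: cross2_eq algebra_simps)
  have "(V 1 - V 0) + (V 2 - V 1) = - (V 0 - V 2)" by simp
  then have lc': "lc = cmod ((V 1 - V 0) + (V 2 - V 1))" unfolding lc_def by (simp only: norm_minus_cancel)
  show her: "4 * Dv^2 = (la + lb + lc) * (lb + lc - la) * (lc + la - lb) * (la + lb - lc)"
    unfolding Dv_def heron la_def lb_def lc' by simp
  have r1: "cmod (V 1 - V 2) = lb" "cmod (V 2 - V 0) = lc" "cmod (V 0 - V 1) = la"
    unfolding la_def lb_def lc_def by (simp_all only: norm_minus_commute)
  have t1: "la \<le> lb + lc" using dist_triangle[of "V 1" "V 0" "V 2"]
    unfolding dist_norm r1 la_def[symmetric] lb_def[symmetric] lc_def[symmetric] .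
  have t2: "lb \<le> lc + la" using dist_triangle[of "V 2" "V 1" "V 0"]
    unfolding dist_norm r1 la_def[symmetric] lb_def[symmetric] lc_def[symmetric] .
  have t3: "lc \<le> la + lb" using dist_triangle[of "V 0" "V 2" "V 1"]
    unfolding dist_norm r1 la_def[symmetric] lb_def[symmetric] lc_def[symmetric] .
  have "(la + lb + lc) * (lb + lc - la) * (lc + la - lb) * (la + lb - lc) \<noteq> 0"
    using Dnz unfolding her[symmetric] by simp
  then have nz: "lb + lc - la \<noteq> 0" "lc + la - lb \<noteq> 0" "la + lb - lc \<noteq> 0"
    by auto
  show "lb + lc - la > 0" "lc + la - lb > 0" "la + lb - lc > 0"
    using nz t1 t2 t3 by linarith+
qed

lemma ribbonlength_eq:
  "ribbonlength V w = (cmod (V 1 - V 0) + cmod (V 2 - V 1) + cmod (V 0 - V 2)) / w"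
  unfolding ribbonlength_def edge_vals ..

lemma lower_bound:
  fixes V :: "nat \<Rightarrow> complex"
  assumes fr: "folded_ribbon_3stick V w"
  shows "sqrt 3 \<le> ribbonlength V w"
proof -
  define la where "la = cmod (V 1 - V 0)"
  define lb where "lb = cmod (V 2 - V 1)"
  define lc where "lc = cmod (V 0 - V 2)"
  define Dv where "Dv = cross2 (V 1 - V 0) (V 2 - V 1)"
  have nc: "\<not> collinear {V 0, V 1, V 2}" and w: "w > 0"
    and disj: "\<And>i j. i < 3 \<Longrightarrow> j < 3 \<Longrightarrow> i \<noteq> j \<Longrightarrow> fold_segment V w i \<inter> fold_segment V w j = {}"
    using fr unfolding folded_ribbon_3stick_def by auto
  note tf = tri_facts[OF nc, folded la_def lb_def lc_def Dv_def]
  have d01: "fs (V 0) (V 1) (V 2) w \<inter> fs (V 1) (V 2) (V 0) w = {}"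
    using disj[of 0 1, unfolded fold_seg_0 fold_seg_1] by simp
  have d12: "fs (V 1) (V 2) (V 0) w \<inter> fs (V 2) (V 0) (V 1) w = {}"
    using disj[of 1 2, unfolded fold_seg_1 fold_seg_2] by simp
  have d20: "fs (V 2) (V 0) (V 1) w \<inter> fs (V 0) (V 1) (V 2) w = {}"
    using disj[of 2 0, unfolded fold_seg_0 fold_seg_2] by simp
  have hx: "\<not> \<bar>Dv\<bar> / (lb + lc - la) < w/2"
    using key_sgn[where A="V 0" and B="V 1" and C="V 2" and w=w] d01 tf(1) tf(5)
    unfolding la_def lb_def lc_def Dv_def by simp
  have hy: "\<not> \<bar>Dv\<bar> / (lc + la - lb) < w/2"
    using key_sgn[where A="V 1" and B="V 2" and C="V 0" and w=w] d12 tf(1,2) tf(6)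
    unfolding la_def lb_def lc_def Dv_def by simp
  have hz: "\<not> \<bar>Dv\<bar> / (la + lb - lc) < w/2"
    using key_sgn[where A="V 2" and B="V 0" and C="V 1" and w=w] d20 tf(1,3) tf(7)
    unfolding la_def lb_def lc_def Dv_def by simp
  have hx': "w * (lb + lc - la) \<le> 2 * \<bar>Dv\<bar>" using hx tf(5) by (simp add: field_simps)
  have hy': "w * (lc + la - lb) \<le> 2 * \<bar>Dv\<bar>" using hy tf(6) by (simp add: field_simps)
  have hz': "w * (la + lb - lc) \<le> 2 * \<bar>Dv\<bar>" using hz tf(7) by (simp add: field_simps)
  have her: "4 * \<bar>Dv\<bar>^2 = ((lb + lc - la) + (lc + la - lb) + (la + lb - lc)) * (lb + lc - la) * (lc + la - lb) * (la + lb - lc)"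
    using tf(4) by (simp add: algebra_simps)
  have "sqrt 3 \<le> ((lb + lc - la) + (lc + la - lb) + (la + lb - lc)) / w"
    by (rule final_ineq[OF w tf(5) tf(6) tf(7) _ hx' hy' hz' her]) simp
  also have "\<dots> = ribbonlength V w" unfolding ribbonlength_eq la_def lb_def lc_def
    by (simp add: algebra_simps)
  finally show ?thesis .
qed


lemma sum3: "(\<Sum>m<(3::nat). g m) = g 0 + g 1 + (g 2 :: real)"
  by (simp add: eval_nat_numeral)

lemma Lk_val: "ribbon_Lk V (\<lambda>m. m = 0) = sgn (cross2 (V 1 - V 0) (V 2 - V 1))"
proof -
  have c1: "cross2 (V 1 - V 0) (V 0 - V 2) = - cross2 (V 1 - V 0) (V 2 - V 1)"
    by (simp add: cross2_eq algebra_simps)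
  have c2: "cross2 (V 2 - V 1) (V 0 - V 2) = cross2 (V 1 - V 0) (V 2 - V 1)"
    by (simp add: cross2_eq algebra_simps)
  have e: "(0::nat) + 2 = 2" "(1::nat) + 2 = 3" "(2::nat) + 2 = 4" by simp_all
  show ?thesis
    unfolding ribbon_Lk_def sum3 Let_def e edge_vals crossing_sign_def c1 c2
    by (simp add: sgn_minus)
qed

lemma all_pairs:
  fixes P :: "nat \<Rightarrow> nat \<Rightarrow> bool"
  assumes "P 0 1" "P 1 2" "P 2 0" "\<And>i j. P i j \<Longrightarrow> P j i"
  shows "\<forall>i<3. \<forall>j<3. i \<noteq> j \<longrightarrow> P i j"
proof (intro allI impI)
  fix i j :: nat
  assume "i < 3" "j < 3" "i \<noteq> j"
  then have "i \<in> {0, 1, 2}" "j \<in> {0, 1, 2}" by auto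
  then show "P i j" using assms \<open>i \<noteq> j\<close> by auto
qed

lemma equi:
  fixes V :: "nat \<Rightarrow> complex"
  assumes nc: "\<not> collinear {V 0, V 1, V 2}"
    and d1: "dist (V 0) (V 1) = dist (V 1) (V 2)" and d2: "dist (V 1) (V 2) = dist (V 2) (V 0)"
  shows "folded_ribbon_3stick V (sqrt 3 * cmod (V 1 - V 0)) \<and> \<bar>ribbon_Lk V (\<lambda>m. m = 0)\<bar> = 1
     \<and> ribbonlength V (sqrt 3 * cmod (V 1 - V 0)) = sqrt 3"
proof -
  define la where "la = cmod (V 1 - V 0)"
  define lb where "lb = cmod (V 2 - V 1)"
  define lc where "lc = cmod (V 0 - V 2)"
  define Dv where "Dv = cross2 (V 1 - V 0) (V 2 - V 1)"
  note tf = tri_facts[OF nc, folded la_def lb_def lc_def Dv_def]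
  have ab: "lb = la" using d1 unfolding la_def lb_def dist_norm by (simp add: norm_minus_commute)
  have bc: "lc = la" using d1 d2 unfolding la_def lc_def dist_norm by (simp add: norm_minus_commute)
  define s where "s = la"
  have spos: "s > 0" using tf(7) ab bc s_def by simp
  define w where "w = sqrt 3 * s"
  have wpos: "w > 0" using spos w_def by simp
  have "4 * Dv^2 = 3 * s^2 * s^2" using tf(4) ab bc s_def by (simp add: power2_eq_square algebra_simps)
  then have "(2 * \<bar>Dv\<bar>)^2 = (sqrt 3 * s^2)^2" by (simp add: power_mult_distrib)
  then have Dabs: "2 * \<bar>Dv\<bar> = sqrt 3 * s^2"
    using spos by (subst (asm) power2_eq_iff_nonneg) auto
  have E: "\<not> \<bar>Dv\<bar> / s < w / 2"
  proof -
    have "\<bar>Dv\<bar> / s = w / 2" using Dabs spos unfolding w_def by (simp add: field_simps power2_eq_square)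
    then show ?thesis by simp
  qed
  have e01: "fs (V 0) (V 1) (V 2) w \<inter> fs (V 1) (V 2) (V 0) w = {}"
    using key_sgn[where A="V 0" and B="V 1" and C="V 2" and w=w] tf(1) tf(5) E ab bc s_def
    unfolding la_def lb_def lc_def Dv_def by fastforce
  have e12: "fs (V 1) (V 2) (V 0) w \<inter> fs (V 2) (V 0) (V 1) w = {}"
    using key_sgn[where A="V 1" and B="V 2" and C="V 0" and w=w] tf(1,2) tf(6) E ab bc s_def
    unfolding la_def lb_def lc_def Dv_def by fastforce
  have e20: "fs (V 2) (V 0) (V 1) w \<inter> fs (V 0) (V 1) (V 2) w = {}"
    using key_sgn[where A="V 2" and B="V 0" and C="V 1" and w=w] tf(1,3) tf(7) E ab bc s_def
    unfolding la_def lb_def lc_def Dv_def by fastforce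
  have disj: "\<forall>i<3. \<forall>j<3. i \<noteq> j \<longrightarrow> fold_segment V w i \<inter> fold_segment V w j = {}"
  proof (rule all_pairs[where P = "\<lambda>i j. fold_segment V w i \<inter> fold_segment V w j = {}"])
    show "fold_segment V w 0 \<inter> fold_segment V w 1 = {}" by (simp only: fold_seg_0 fold_seg_1 e01)
    show "fold_segment V w 1 \<inter> fold_segment V w 2 = {}" by (simp only: fold_seg_1 fold_seg_2 e12)
    show "fold_segment V w 2 \<inter> fold_segment V w 0 = {}" by (simp only: fold_seg_2 fold_seg_0 e20)
  qed (simp add: Int_commute)
  have fr: "folded_ribbon_3stick V w"
    unfolding folded_ribbon_3stick_def using nc wpos disj by blast
  have Lk: "\<bar>ribbon_Lk V (\<lambda>m. m = 0)\<bar> = 1"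
    unfolding Lk_val using tf(1) unfolding Dv_def by (simp add: abs_sgn)
  have rl: "ribbonlength V w = sqrt 3"
  proof -
    have "ribbonlength V w = 3 * s / (sqrt 3 * s)" unfolding ribbonlength_eq w_def
      using ab bc s_def unfolding la_def lb_def lc_def by simp
    also have "\<dots> = sqrt 3" using spos
      by (simp add: field_simps)
    finally show ?thesis .
  qed
  show ?thesis using fr Lk rl unfolding w_def s_def la_def by simp
qed


definition Veq :: "nat \<Rightarrow> complex" where
  "Veq n = (if n = 0 then 0 else if n = 1 then 1 else Complex (1/2) (sqrt 3 / 2))"

lemma Veq_props: "\<not> collinear {Veq 0, Veq 1, Veq 2}" "dist (Veq 0) (Veq 1) = dist (Veq 1) (Veq 2)"
  "dist (Veq 1) (Veq 2) = dist (Veq 2) (Veq 0)"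
proof -
  show "\<not> collinear {Veq 0, Veq 1, Veq 2}" unfolding coll_iff by (simp add: Veq_def cross2_eq)
  have a: "dist (Veq 0) (Veq 1) = 1" by (simp add: Veq_def)
  have "(1/2::real)^2 + (sqrt 3 / 2)^2 = 1" by (simp add: power_divide)
  then have b: "dist (Veq 1) (Veq 2) = 1" "dist (Veq 2) (Veq 0) = 1"
    by (simp_all add: Veq_def dist_norm cmod_def power2_eq_square)
  show "dist (Veq 0) (Veq 1) = dist (Veq 1) (Veq 2)" "dist (Veq 1) (Veq 2) = dist (Veq 2) (Veq 0)"
    using a b by simp_all
qed

theorem corollary5p7:
  shows "Inf {ribbonlength V w | (V :: nat \<Rightarrow> complex) w (F :: nat \<Rightarrow> bool).
              folded_ribbon_3stick V w \<and> \<bar>ribbon_Lk V F\<bar> = 1} = sqrt 3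
    \<and> (\<forall>V :: nat \<Rightarrow> complex.
          \<not> collinear {V 0, V 1, V 2} \<and> dist (V 0) (V 1) = dist (V 1) (V 2)
          \<and> dist (V 1) (V 2) = dist (V 2) (V 0) \<longrightarrow>
          (\<exists>w F. folded_ribbon_3stick V w \<and> \<bar>ribbon_Lk V F\<bar> = 1
                 \<and> ribbonlength V w = sqrt 3))"
proof
  show P2: "\<forall>V :: nat \<Rightarrow> complex.
          \<not> collinear {V 0, V 1, V 2} \<and> dist (V 0) (V 1) = dist (V 1) (V 2)
          \<and> dist (V 1) (V 2) = dist (V 2) (V 0) \<longrightarrow>
          (\<exists>w F. folded_ribbon_3stick V w \<and> \<bar>ribbon_Lk V F\<bar> = 1
                 \<and> ribbonlength V w = sqrt 3)"
    using equi by blast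
  show "Inf {ribbonlength V w | (V :: nat \<Rightarrow> complex) w (F :: nat \<Rightarrow> bool).
              folded_ribbon_3stick V w \<and> \<bar>ribbon_Lk V F\<bar> = 1} = sqrt 3"
  proof (rule cInf_eq_minimum)
    show "sqrt 3 \<in> {ribbonlength V w | (V :: nat \<Rightarrow> complex) w (F :: nat \<Rightarrow> bool).
              folded_ribbon_3stick V w \<and> \<bar>ribbon_Lk V F\<bar> = 1}"
      using equi[OF Veq_props] by force
  next
    fix x assume "x \<in> {ribbonlength V w | (V :: nat \<Rightarrow> complex) w (F :: nat \<Rightarrow> bool).
              folded_ribbon_3stick V w \<and> \<bar>ribbon_Lk V F\<bar> = 1}"
    then show "sqrt 3 \<le> x" using lower_bound by blast
  qed
qed

end
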